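(* Let $F\subseteq E(H)$ with $|F|=\ell$, and let $X\subseteq V$ be a cut with $S_i\subseteq X$ and $T_i\subseteq V\setminus X$ for some $i\in[q]$. If $X$ is intact with respect to $F$, then $\tilde x(\delta_G(X)\setminus F)\ge 3/4$.
   Context: Standing setup. $G=(V,E)$ is an undirected graph with $n=|V|$, demand-pairs $(S_i,T_i)$, $i\in[q]$, of subsets of $V$. $\ell\ge1$ is an integer and $E_\ell\subseteq E$ an edge set such that in $(V,E_\ell)$ every $(S_i,T_i)$ is $\ell$-edge-connected. $x:E\to[0,1]$ satisfies $x_e=1$ for $e\in E_\ell$ and $\sum_{e\in\delta_G(X)}x_e\ge \ell+1$ for every $i\in[q]$ and every $X$ with $T_i\subseteq X\subseteq V\setminus S_i$ (here $\delta_G(X)$ is the set of edges of $G$ with exactly one endpoint in $X$, and $x(F)=\sum_{e\in F}x_e$). $\beta\ge1$ is a real. $\mathsf{LARGE}=\{e: x_e\ge 1/(4\ell\beta)\}$, $\mathsf{SMALL}=E\setminus\mathsf{LARGE}$, and $H=(V,\mathsf{LARGE})$. Capacities: $\tilde x_e=1/(4\ell\beta)$ if $e\in\mathsf{LARGE}$; $\tilde x_e=0$ if $x_e<\frac{1}{2n^2}\cdot\frac1{4\ell\beta}$; $\tilde x_e=x_e$ otherwise. $\mathbb Q^F$ is the set of vertex sets of connected components of $(V,E(H)\setminus F)$. A cut $X\subseteq V$ is shattered (w.r.t. $F$) if some $Q\in\mathbb Q^F$ satisfies $Q\cap X\neq\emptyset$ and $Q\cap(V\setminus X)\neq\emptyset$;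 otherwise $X$ is intact. *)

theory Defs
  imports Complex_Main
begin

definition simple_graph :: "'v set \<Rightarrow> 'v set set \<Rightarrow> bool" where
  "simple_graph V E \<longleftrightarrow> finite V \<and> (\<forall>e\<in>E. e \<subseteq> V \<and> card e = 2)"

definition cut_edges :: "'v set set \<Rightarrow> 'v set \<Rightarrow> 'v set set" where
  "cut_edges E X = {e \<in> E. e \<inter> X \<noteq> {} \<and> e - X \<noteq> {}}"

definition pair_edge_conn :: "'v set \<Rightarrow> 'v set set \<Rightarrow> 'v set \<Rightarrow> 'v set \<Rightarrow> nat \<Rightarrow> bool" where
  "pair_edge_conn V E S T l \<longleftrightarrow>
     (\<forall>X. T \<subseteq> X \<and> X \<subseteq> V - S \<longrightarrow> card (cut_edges E X) \<ge> l)"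

definition LARGE :: "'v set set \<Rightarrow> ('v set \<Rightarrow> real) \<Rightarrow> nat \<Rightarrow> real \<Rightarrow> 'v set set" where
  "LARGE E x l \<beta> = {e \<in> E. x e \<ge> 1 / (4 * real l * \<beta>)}"

definition SMALL :: "'v set set \<Rightarrow> ('v set \<Rightarrow> real) \<Rightarrow> nat \<Rightarrow> real \<Rightarrow> 'v set set" where
  "SMALL E x l \<beta> = E - LARGE E x l \<beta>"

definition xtilde :: "'v set \<Rightarrow> 'v set set \<Rightarrow> ('v set \<Rightarrow> real) \<Rightarrow> nat \<Rightarrow> real \<Rightarrow> 'v set \<Rightarrow> real" where
  "xtilde V E x l \<beta> e =
     (if e \<in> LARGE E x l \<beta> then 1 / (4 * real l * \<beta>)
      else if x e < (1 / (2 * real (card V) ^ 2)) * (1 / (4 * real l * \<beta>)) then 0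
      else x e)"

definition adj :: "'v set set \<Rightarrow> ('v \<times> 'v) set" where
  "adj A = {(u, v). {u, v} \<in> A}"

definition components :: "'v set \<Rightarrow> 'v set set \<Rightarrow> 'v set set" where
  "components V A = V // {(u, v). u \<in> V \<and> v \<in> V \<and> (u, v) \<in> (adj A)\<^sup>*}"

definition shattered :: "'v set \<Rightarrow> 'v set set \<Rightarrow> 'v set set \<Rightarrow> 'v set \<Rightarrow> bool" where
  "shattered V EH F X \<longleftrightarrow>
     (\<exists>Q \<in> components V (EH - F). Q \<inter> X \<noteq> {} \<and> Q \<inter> (V - X) \<noteq> {})"

definition intact :: "'v set \<Rightarrow> 'v set set \<Rightarrow> 'v set set \<Rightarrow> 'v set \<Rightarrow> bool" where
  "intact V EH F X \<longleftrightarrow> \<not> shattered V EH F X"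

end

theory Submission
  imports Defs
begin

theorem lemma5p7:
  fixes V :: "'v set" and E El :: "'v set set" and S T :: "nat \<Rightarrow> 'v set"
    and q l :: nat and x :: "'v set \<Rightarrow> real" and \<beta> :: real
    and F :: "'v set set" and X :: "'v set" and i :: nat
  assumes G: "simple_graph V E"
    and ST: "\<forall>j\<in>{1..q}. S j \<subseteq> V \<and> T j \<subseteq> V"
    and l: "l \<ge> 1"
    and El: "El \<subseteq> E"
    and Elconn: "\<forall>j\<in>{1..q}. pair_edge_conn V El (S j) (T j) l"
    and x01: "\<forall>e\<in>E. 0 \<le> x e \<and> x e \<le> 1"
    and xEl: "\<forall>e\<in>El. x e = 1"
    and xcut: "\<forall>j\<in>{1..q}. \<forall>Y. T j \<subseteq> Y \<and> Y \<subseteq> V - S j \<longrightarrow>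
                 (\<Sum>e\<in>cut_edges E Y. x e) \<ge> real l + 1"
    and \<beta>: "\<beta> \<ge> 1"
    and F: "F \<subseteq> LARGE E x l \<beta>" "card F = l"
    and X: "X \<subseteq> V" "i \<in> {1..q}" "S i \<subseteq> X" "T i \<subseteq> V - X"
    and int: "intact V (LARGE E x l \<beta>) F X"
  shows "(\<Sum>e\<in>cut_edges E X - F. xtilde V E x l \<beta> e) \<ge> 3 / 4"
proof -
  let ?D = "cut_edges E X"
  let ?c = "1 / (4 * real l * \<beta>)"
  let ?thr = "(1 / (2 * real (card V) ^ 2)) * ?c"
  have finV: "finite V" and Esub: "\<forall>e\<in>E. e \<subseteq> V \<and> card e = 2"
    using G by (auto simp: simple_graph_def)
  have ESV: "E \<subseteq> {B. B \<subseteq> V \<and> card B = 2}" using Esub by auto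
  have finE: "finite E"
    by (rule finite_subset[OF ESV]) (use finV in auto)
  have cardE: "card E \<le> card V choose 2"
    using card_mono[OF _ ESV] finV n_subsets[OF finV, of 2] by auto
  have "card V choose 2 \<le> card V ^ 2"
    by (cases "2 \<le> card V") (auto intro: binomial_le_pow simp: binomial_eq_0)
  hence cardE2: "real (card E) \<le> real (card V) ^ 2"
    using cardE by (metis le_trans of_nat_le_iff of_nat_power)
  have DE: "?D \<subseteq> E" by (auto simp: cut_edges_def)
  have finD: "finite ?D" using finite_subset[OF DE finE] .
  have finF: "finite F" using F(2) l by (metis card.infinite not_one_le_zero)
  have noL: "e \<notin> LARGE E x l \<beta>" if e: "e \<in> ?D - F" for e
  proof
    assume eL: "e \<in> LARGE E x l \<beta>"
    from e obtain u v where u: "u \<in> e" "u \<in> X" and v: "v \<in> e" "v \<notin> X"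
      by (auto simp: cut_edges_def)
    have eE: "e \<in> E" using e by (auto simp: cut_edges_def)
    then have "card e = 2" "e \<subseteq> V" using Esub by auto
    then obtain a b where ab: "e = {a, b}" "a \<noteq> b" by (auto simp: card_2_iff)
    have uv: "e = {u, v}" using u v ab by auto
    have uV: "u \<in> V" "v \<in> V" using uv \<open>e \<subseteq> V\<close> by auto
    let ?R = "{(u, v). u \<in> V \<and> v \<in> V \<and> (u, v) \<in> (adj (LARGE E x l \<beta> - F))\<^sup>*}"
    have "(u, v) \<in> adj (LARGE E x l \<beta> - F)" using eL e uv by (auto simp: adj_def)
    hence inR: "(u, v) \<in> ?R" using uV by auto
    have Q: "?R `` {u} \<in> components V (LARGE E x l \<beta> - F)"
      unfolding components_def using uV(1) by (rule quotientI)
    have uR: "u \<in> ?R `` {u}" using uV by auto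
    have vR: "v \<in> ?R `` {u}" using inR by auto
    have "shattered V (LARGE E x l \<beta>) F X"
      unfolding shattered_def
    proof (rule bexI[OF _ Q])
      show "?R `` {u} \<inter> X \<noteq> {} \<and> ?R `` {u} \<inter> (V - X) \<noteq> {}"
        using uR vR u(2) v(2) uV(2) by blast
    qed
    thus False using int by (simp add: intact_def)
  qed
  have cutc: "cut_edges E (V - X) = ?D"
    using Esub by (auto simp: cut_edges_def)
  have "(\<Sum>e\<in>cut_edges E (V - X). x e) \<ge> real l + 1"
  proof -
    have "T i \<subseteq> V - X \<and> V - X \<subseteq> V - S i" using X by blast
    thus ?thesis using xcut X(2) by blast
  qed
  hence sD: "(\<Sum>e\<in>?D. x e) \<ge> real l + 1" using cutc by simp
  have sF: "(\<Sum>e\<in>?D \<inter> F. x e) \<le> real l"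
  proof -
    have "(\<Sum>e\<in>?D \<inter> F. x e) \<le> (\<Sum>e\<in>?D \<inter> F. 1)"
      by (rule sum_mono) (use x01 DE in auto)
    also have "\<dots> = real (card (?D \<inter> F))" by simp
    also have "\<dots> \<le> real l" using card_mono[OF finF, of "?D \<inter> F"] F(2) by auto
    finally show ?thesis .
  qed
  have "(\<Sum>e\<in>?D - F. x e) = (\<Sum>e\<in>?D. x e) - (\<Sum>e\<in>?D \<inter> F. x e)"
  proof -
    have "?D - F = ?D - ?D \<inter> F" by blast
    thus ?thesis using sum_diff[OF finD, of "?D \<inter> F" x] by simp
  qed
  hence s1: "(\<Sum>e\<in>?D - F. x e) \<ge> 1" using sD sF by linarith
  have thr0: "?thr \<ge> 0" using l \<beta> by simp
  have pt: "xtilde V E x l \<beta> e \<ge> x e - ?thr" if "e \<in> ?D - F" for e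
    using noL[OF that] thr0 unfolding xtilde_def by auto
  have "(\<Sum>e\<in>?D - F. xtilde V E x l \<beta> e) \<ge> (\<Sum>e\<in>?D - F. x e - ?thr)"
    by (rule sum_mono) (rule pt)
  moreover have "(\<Sum>e\<in>?D - F. x e - ?thr) = (\<Sum>e\<in>?D - F. x e) - real (card (?D - F)) * ?thr"
    by (simp add: sum_subtractf)
  moreover have "real (card (?D - F)) * ?thr \<le> 1/4"
  proof -
    have cD: "real (card (?D - F)) \<le> real (card V) ^ 2"
    proof -
      have "card (?D - F) \<le> card E" using card_mono[OF finE, of "?D - F"] DE by blast
      hence "real (card (?D - F)) \<le> real (card E)" by simp
      thus ?thesis using cardE2 by linarith
    qed
    have "1 \<le> real l * \<beta>" using l \<beta>
      by (metis mult_mono' of_nat_1 of_nat_0_le_iff of_nat_mono mult_1_left zero_le_one)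
    hence c1: "?c \<le> 1/4" by (simp add: field_simps)
    have c0: "?c \<ge> 0" using l \<beta> by simp
    have "real (card (?D - F)) * ?thr \<le> real (card V) ^ 2 * ?thr"
      by (rule mult_right_mono[OF cD thr0])
    also have "\<dots> = (real (card V) ^ 2 / (2 * real (card V) ^ 2)) * ?c" by simp
    also have "\<dots> \<le> (1/2) * ?c"
      by (rule mult_right_mono[OF _ c0]) (cases "card V = 0", auto)
    also have "\<dots> \<le> 1/4" using c1 by linarith
    finally show ?thesis .
  qed
  ultimately show ?thesis using s1 by linarith
qed

end
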